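(* Let $d$ be a square-free positive integer such that $E=\mathbb{Q}(\sqrt{-d})$ has class number at least $4$, and let $\mathcal{O}$ be its ring of integers. Let $\mathfrak{P}$ be a non-principal prime ideal of $\mathcal{O}$ and let $p$ be the prime number lying below $\mathfrak{P}$. Suppose $p\mid d$. Then for every positive integer $r\geq (p-1)d/p$, the unary Hermitian lattice $\mathfrak{P}v$, where $v$ spans a one-dimensional Hermitian space over $E$ with $h(v)=r/p$, is represented by $I_4$.
   Context: A Hermitian space is a finite-dimensional $E$-vector space with a map $h$ that is $E$-linear in the first argument and satisfies $h(v,w)=\overline{h(w,v)}$; $h(v):=h(v,v)$. $I_4$ is the Hermitian lattice $\mathcal{O}^4$ with $h(x,y)=\sum_{i=1}^4 x_i\overline{y_i}$. A lattice $L$ is represented by $I_4$ if there is an injective $\mathcal{O}$-linear map $L\to I_4$ preserving $h$. *)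

theory Defs
  imports "HOL-Analysis.Analysis" "HOL-Computational_Algebra.Squarefree"
          "HOL-Computational_Algebra.Polynomial"
begin

definition quad_field :: "nat \<Rightarrow> complex set" where
  "quad_field d = {of_real (real_of_rat a) + of_real (real_of_rat b) * \<i> * of_real (sqrt (real d)) | a b. True}"

definition alg_int :: "complex \<Rightarrow> bool" where
  "alg_int z \<longleftrightarrow> (\<exists>q :: int poly. lead_coeff q = 1 \<and> poly (map_poly of_int q) z = 0)"

definition ring_of_ints :: "nat \<Rightarrow> complex set" where
  "ring_of_ints d = {z \<in> quad_field d. alg_int z}"

definition is_ideal :: "nat \<Rightarrow> complex set \<Rightarrow> bool" where
  "is_ideal d I \<longleftrightarrow> I \<subseteq> ring_of_ints d \<and> 0 \<in> I \<and>
     (\<forall>x\<in>I. \<forall>y\<in>I. x + y \<in> I) \<and> (\<forall>x\<in>I. - x \<in> I) \<and>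
     (\<forall>a\<in>ring_of_ints d. \<forall>x\<in>I. a * x \<in> I)"

definition principal_ideal :: "nat \<Rightarrow> complex set \<Rightarrow> bool" where
  "principal_ideal d I \<longleftrightarrow> (\<exists>a\<in>ring_of_ints d. I = {a * x | x. x \<in> ring_of_ints d})"

definition prime_ideal :: "nat \<Rightarrow> complex set \<Rightarrow> bool" where
  "prime_ideal d P \<longleftrightarrow> is_ideal d P \<and> P \<noteq> {0} \<and> P \<noteq> ring_of_ints d \<and>
     (\<forall>a\<in>ring_of_ints d. \<forall>b\<in>ring_of_ints d. a * b \<in> P \<longrightarrow> a \<in> P \<or> b \<in> P)"

definition nonzero_ideals :: "nat \<Rightarrow> complex set set" where
  "nonzero_ideals d = {I. is_ideal d I \<and> I \<noteq> {0}}"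

definition ideal_equiv :: "nat \<Rightarrow> (complex set \<times> complex set) set" where
  "ideal_equiv d = {(I, J). I \<in> nonzero_ideals d \<and> J \<in> nonzero_ideals d \<and>
     (\<exists>a\<in>ring_of_ints d - {0}. \<exists>b\<in>ring_of_ints d - {0}. (\<lambda>x. a * x) ` I = (\<lambda>x. b * x) ` J)}"

definition class_number :: "nat \<Rightarrow> nat" where
  "class_number d = card (nonzero_ideals d // ideal_equiv d)"

text \<open>A lattice L (an O-submodule of a one-dimensional Hermitian space, realised
  as a subset of E with Hermitian form hL) is represented by I_4 = O^4.\<close>
definition represented_by_I4 :: "nat \<Rightarrow> complex set \<Rightarrow> (complex \<Rightarrow> complex \<Rightarrow> complex) \<Rightarrow> bool" where
  "represented_by_I4 d L hL \<longleftrightarrow> (\<exists>\<sigma> :: complex \<Rightarrow> complex ^ 4.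
      (\<forall>x\<in>L. \<forall>i. \<sigma> x $ i \<in> ring_of_ints d) \<and>
      (\<forall>x\<in>L. \<forall>y\<in>L. \<sigma> (x + y) = \<sigma> x + \<sigma> y) \<and>
      (\<forall>a\<in>ring_of_ints d. \<forall>x\<in>L. \<forall>i. \<sigma> (a * x) $ i = a * (\<sigma> x $ i)) \<and>
      inj_on \<sigma> L \<and>
      (\<forall>x\<in>L. \<forall>y\<in>L. (\<Sum>i\<in>UNIV. \<sigma> x $ i * cnj (\<sigma> y $ i)) = hL x y))"

end

theory Submission
  imports Defs "HOL-Computational_Algebra.Primes"
begin

definition s4 :: "int \<Rightarrow> bool" where
  "s4 n \<longleftrightarrow> (\<exists>a b c e. n = a^2 + b^2 + c^2 + e^2)"

lemma euler4:
  fixes a1 a2 a3 a4 b1 b2 b3 b4 :: int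
  shows "(a1^2+a2^2+a3^2+a4^2)*(b1^2+b2^2+b3^2+b4^2) =
    (a1*b1+a2*b2+a3*b3+a4*b4)^2 + (a1*b2-a2*b1+a3*b4-a4*b3)^2 +
    (a1*b3-a3*b1+a4*b2-a2*b4)^2 + (a1*b4-a4*b1+a2*b3-a3*b2)^2"
  by algebra

lemma s4_mult: "s4 x \<Longrightarrow> s4 y \<Longrightarrow> s4 (x*y)"
  unfolding s4_def using euler4 by metis

lemma dvd_small: "(p::int) dvd k \<Longrightarrow> \<bar>k\<bar> < p \<Longrightarrow> k = 0"
  using dvd_imp_le_int[of k p] by auto

lemma odd_prime_aux:
  fixes p :: int
  assumes "prime p" "p = 2*h+1"
  shows "\<exists>x y. 0 \<le> x \<and> x \<le> h \<and> 0 \<le> y \<and> y \<le> h \<and> p dvd (x^2 + y^2 + 1)"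
proof (rule ccontr)
  assume nex: "\<not> ?thesis"
  have p2: "p \<ge> 2" using assms prime_ge_2_int by blast
  have h0: "h \<ge> 0" using p2 assms by linarith
  define A where "A = {0..h}"
  define f where "f = (\<lambda>x. x^2 mod p)"
  define g where "g = (\<lambda>y. (-1 - y^2) mod p)"
  have key: "x = y" if "x \<in> A" "y \<in> A" "p dvd (x - y) * (x + y)" for x y
  proof -
    have "p dvd (x - y) \<or> p dvd (x + y)" using that(3) assms(1) prime_dvd_mult_iff by blast
    moreover have "\<bar>x - y\<bar> < p" "0 \<le> x + y" "x + y < p" using that(1,2) assms(2) by (auto simp: A_def)
    ultimately show ?thesis
      using dvd_small[of p "x - y"] dvd_small[of p "x + y"] that(1,2) by (auto simp: A_def)
  qed
  have injf: "inj_on f A"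
  proof
    fix x y assume xy: "x \<in> A" "y \<in> A" "f x = f y"
    then have "p dvd x^2 - y^2" unfolding f_def by (simp add: mod_eq_dvd_iff)
    then have "p dvd (x - y) * (x + y)" by (simp add: power2_eq_square algebra_simps)
    then show "x = y" using key xy by blast
  qed
  have injg: "inj_on g A"
  proof
    fix x y assume xy: "x \<in> A" "y \<in> A" "g x = g y"
    then have "p dvd (-1 - x^2) - (-1 - y^2)" unfolding g_def by (simp add: mod_eq_dvd_iff)
    then have "p dvd (y - x) * (y + x)" by (simp add: power2_eq_square algebra_simps)
    then show "x = y" using key xy by (metis)
  qed
  have disj: "f ` A \<inter> g ` A = {}"
  proof (rule ccontr)
    assume "f ` A \<inter> g ` A \<noteq> {}"
    then obtain x y where xy: "x \<in> A" "y \<in> A" "f x = g y" by auto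
    then have "p dvd x^2 - (-1 - y^2)" unfolding f_def g_def by (simp add: mod_eq_dvd_iff)
    then have "p dvd x^2 + y^2 + 1" by (simp add: algebra_simps)
    then show False using nex xy by (auto simp: A_def)
  qed
  have sub: "f ` A \<union> g ` A \<subseteq> {0..<p}" using p2 by (auto simp: f_def g_def)
  have cA: "card A = nat (h + 1)" by (simp add: A_def)
  have "card (f ` A \<union> g ` A) = card (f ` A) + card (g ` A)"
    by (rule card_Un_disjoint) (use disj in \<open>auto simp: A_def\<close>)
  also have "\<dots> = 2 * nat (h+1)" using card_image[OF injf] card_image[OF injg] cA by simp
  finally have "2 * nat (h+1) \<le> card {0..<p}" using card_mono[OF _ sub] by (metis finite_atLeastLessThan_int)
  then show False using assms(2) h0 by simp
qed


lemma red_props: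
  fixes m x :: int
  assumes "m > 1"
  obtains y k where "x = y + m*k" "(2*y)^2 \<le> m^2" "(2*y)^2 = m^2 \<Longrightarrow> 2*y = m"
proof -
  define c where "c = (m - 1) div 2"
  define y where "y = (x + c) mod m - c"
  define k where "k = (x + c) div m"
  have dm: "m * ((x + c) div m) + (x + c) mod m = x + c" by (rule mult_div_mod_eq)
  have e: "x = y + m*k" unfolding y_def k_def using dm by linarith
  have b1: "0 \<le> (x + c) mod m" "(x + c) mod m < m" using assms by auto
  have cb: "2*c \<le> m - 1" "m - 2 \<le> 2*c" unfolding c_def by presburger+
  obtain t where t: "t = (x + c) mod m" by blast
  have lo: "-m < 2*y" using b1 cb unfolding y_def t[symmetric] by arith
  have hi: "2*y \<le> m" using b1 cb unfolding y_def t[symmetric] by arith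
  have "\<bar>2*y\<bar> \<le> \<bar>m\<bar>" using lo hi by linarith
  then have sq: "(2*y)^2 \<le> m^2" using abs_le_square_iff[of "2*y" m] by simp
  have "2*y = m" if "(2*y)^2 = m^2"
  proof -
    from that have "2*y = m \<or> 2*y = -m" by (simp only: power2_eq_iff)
    then show ?thesis using lo by auto
  qed
  then show ?thesis using that e sq by blast
qed

lemma descent:
  fixes p m :: int
  assumes "prime p" "1 < m" "m < p" "s4 (m*p)"
  shows "\<exists>r. 0 < r \<and> r < m \<and> s4 (r*p)"
proof -
  obtain x1 x2 x3 x4 where xs: "m*p = x1^2 + x2^2 + x3^2 + x4^2" using assms(4) unfolding s4_def by blast
  obtain y1 k1 where 1: "x1 = y1 + m*k1" "(2*y1)^2 \<le> m^2" "(2*y1)^2 = m^2 \<Longrightarrow> 2*y1 = m" using red_props[OF assms(2)] by metis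
  obtain y2 k2 where 2: "x2 = y2 + m*k2" "(2*y2)^2 \<le> m^2" "(2*y2)^2 = m^2 \<Longrightarrow> 2*y2 = m" using red_props[OF assms(2)] by metis
  obtain y3 k3 where 3: "x3 = y3 + m*k3" "(2*y3)^2 \<le> m^2" "(2*y3)^2 = m^2 \<Longrightarrow> 2*y3 = m" using red_props[OF assms(2)] by metis
  obtain y4 k4 where 4: "x4 = y4 + m*k4" "(2*y4)^2 \<le> m^2" "(2*y4)^2 = m^2 \<Longrightarrow> 2*y4 = m" using red_props[OF assms(2)] by metis
  define S where "S = y1^2 + y2^2 + y3^2 + y4^2"
  have mdvd_p: False if "m dvd p"
  proof -
    have "\<forall>m'. m' \<ge> 0 \<and> m' dvd p \<longrightarrow> m' = 1 \<or> m' = p" using assms(1) unfolding prime_int_iff by blast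
    then have "m = 1 \<or> m = p" using that assms(2) by (meson less_imp_le order.strict_trans zero_less_one)
    then show False using assms(2,3) by simp
  qed
  have "m*p = S + m*(2*(y1*k1+y2*k2+y3*k3+y4*k4) + m*(k1^2+k2^2+k3^2+k4^2))"
    unfolding xs S_def 1(1) 2(1) 3(1) 4(1) by algebra
  then have "S = m*(p - (2*(y1*k1+y2*k2+y3*k3+y4*k4) + m*(k1^2+k2^2+k3^2+k4^2)))"
    by (simp add: algebra_simps)
  then obtain r where Sr: "S = m*r" by blast
  have S0: "S \<ge> 0" unfolding S_def by simp
  have "4*S \<le> 4*m^2" using 1(2) 2(2) 3(2) 4(2) unfolding S_def by (simp add: power_mult_distrib)
  then have "m*r \<le> m*m" using Sr by (simp add: power2_eq_square)
  then have r1: "r \<le> m" using assms(2) by simp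
  have "0 \<le> m*r" using Sr S0 by simp
  then have "0 \<le> r" using assms(2) by (simp add: zero_le_mult_iff)
  note r0 = this r1
  have "r \<noteq> 0"
  proof
    assume "r = 0"
    then have "S = 0" using Sr by simp
    then have "y1 = 0" "y2 = 0" "y3 = 0" "y4 = 0" unfolding S_def by (auto simp: sum_power2_eq_zero_iff add_nonneg_eq_0_iff)
    then have "m*p = m*(m*(k1^2+k2^2+k3^2+k4^2))" unfolding xs 1(1) 2(1) 3(1) 4(1) by algebra
    then have "p = m*(k1^2+k2^2+k3^2+k4^2)" using assms(2) by simp
    then show False using mdvd_p by simp
  qed
  moreover have "r \<noteq> m"
  proof
    assume "r = m"
    then have "4*S = 4*m^2" using Sr by (simp add: power2_eq_square)
    then have "(2*y1)^2 + (2*y2)^2 + (2*y3)^2 + (2*y4)^2 = 4*m^2" unfolding S_def by (simp add: power_mult_distrib)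
    then have "(2*y1)^2 = m^2" "(2*y2)^2 = m^2" "(2*y3)^2 = m^2" "(2*y4)^2 = m^2"
      using 1(2) 2(2) 3(2) 4(2) by linarith+
    then have h: "2*y1 = m" "2*y2 = m" "2*y3 = m" "2*y4 = m" using 1(3) 2(3) 3(3) 4(3) by auto
    have "4*(m*p) = (2*y1 + 2*m*k1)^2 + (2*y2 + 2*m*k2)^2 + (2*y3 + 2*m*k3)^2 + (2*y4 + 2*m*k4)^2"
      unfolding xs 1(1) 2(1) 3(1) 4(1) by algebra
    also have "\<dots> = 4*(m*(m*(1 + k1 + k1^2 + k2 + k2^2 + k3 + k3^2 + k4 + k4^2)))"
      unfolding h by algebra
    finally have "p = m*(1 + k1 + k1^2 + k2 + k2^2 + k3 + k3^2 + k4 + k4^2)" using assms(2) by simp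
    then show False using mdvd_p by (metis dvd_triv_left)
  qed
  ultimately have rr: "0 < r" "r < m" using r0 by auto
  define u1 where "u1 = r + (k1*y1 + k2*y2 + k3*y3 + k4*y4)"
  define u2 where "u2 = k1*y2 - k2*y1 + k3*y4 - k4*y3"
  define u3 where "u3 = k1*y3 - k3*y1 + k4*y2 - k2*y4"
  define u4 where "u4 = k1*y4 - k4*y1 + k2*y3 - k3*y2"
  have "x1*y1+x2*y2+x3*y3+x4*y4 = S + m*(k1*y1 + k2*y2 + k3*y3 + k4*y4)"
    unfolding S_def 1(1) 2(1) 3(1) 4(1) by algebra
  then have z1: "x1*y1+x2*y2+x3*y3+x4*y4 = m*u1" unfolding u1_def Sr by (simp add: algebra_simps)
  have z2: "x1*y2-x2*y1+x3*y4-x4*y3 = m*u2" unfolding u2_def 1(1) 2(1) 3(1) 4(1) by algebra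
  have z3: "x1*y3-x3*y1+x4*y2-x2*y4 = m*u3" unfolding u3_def 1(1) 2(1) 3(1) 4(1) by algebra
  have z4: "x1*y4-x4*y1+x2*y3-x3*y2 = m*u4" unfolding u4_def 1(1) 2(1) 3(1) 4(1) by algebra
  have "(m*p)*(m*r) = (m*u1)^2 + (m*u2)^2 + (m*u3)^2 + (m*u4)^2"
    using euler4[of x1 x2 x3 x4 y1 y2 y3 y4] unfolding xs[symmetric] z1 z2 z3 z4 Sr[symmetric] S_def by simp
  moreover have "(m*p)*(m*r) = (m*m)*(r*p)" by (simp add: ac_simps)
  moreover have "(m*u1)^2 + (m*u2)^2 + (m*u3)^2 + (m*u4)^2 = (m*m)*(u1^2 + u2^2 + u3^2 + u4^2)" by algebra
  ultimately have "(m*m)*(r*p) = (m*m)*(u1^2 + u2^2 + u3^2 + u4^2)" by simp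
  then have "r*p = u1^2 + u2^2 + u3^2 + u4^2" using assms(2) by simp
  then show ?thesis using rr unfolding s4_def by blast
qed

lemma prime_s4:
  fixes p :: int
  assumes "prime p"
  shows "s4 p"
proof (cases "p = 2")
  case True
  then show ?thesis unfolding s4_def by (rule_tac x=1 in exI, rule_tac x=1 in exI, rule_tac x=0 in exI, rule_tac x=0 in exI) simp
next
  case False
  have p2: "p \<ge> 2" using assms prime_ge_2_int by blast
  have "odd p" using False p2 by (intro prime_odd_int[OF assms]) simp
  then obtain h where ph: "p = 2*h+1" by (metis oddE)
  have h1: "h \<ge> 1" using p2 False ph by linarith
  obtain x y where xy: "0 \<le> x" "x \<le> h" "0 \<le> y" "y \<le> h" "p dvd (x^2+y^2+1)"
    using odd_prime_aux[OF assms ph] by blast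
  then obtain k where k: "x^2+y^2+1 = p*k" by (elim dvdE)
  have "x^2 \<le> h^2" "y^2 \<le> h^2" using xy by (simp_all add: power_mono)
  then have a1: "x^2+y^2+1 \<le> 2*h^2+1" by linarith
  have a2: "p*p = 2*h^2+1 + (2*h^2 + 4*h)" unfolding ph by (simp add: power2_eq_square algebra_simps)
  have "h^2 \<ge> 0" by simp
  then have "p*k < p*p" using k a1 a2 h1 by linarith
  then have kp: "k < p" using p2 by simp
  have "x^2 \<ge> 0" "y^2 \<ge> 0" by simp_all
  then have "0 < p*k" using k by linarith
  then have k0: "0 < k" using p2 by (simp add: zero_less_mult_iff)
  have "k*p = x^2 + y^2 + 1^2 + 0^2" using k by (simp add: mult.commute)
  then have sk: "s4 (k*p)" unfolding s4_def by blast
  define M where "M = (LEAST n::nat. 0 < n \<and> s4 (int n * p))"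
  have exM: "0 < nat k \<and> s4 (int (nat k) * p)" using k0 sk by simp
  have M: "0 < M" "s4 (int M * p)" using LeastI_ex[of "\<lambda>n::nat. 0 < n \<and> s4 (int n * p)"] exM unfolding M_def by blast+
  have Mle: "M \<le> nat k" unfolding M_def by (rule Least_le) (rule exM)
  have "M = 1"
  proof (rule ccontr)
    assume "M \<noteq> 1"
    then have "1 < int M" "int M < p" using M Mle kp k0 by linarith+
    from descent[OF assms this M(2)] obtain r where r: "0 < r" "r < int M" "s4 (r*p)" by blast
    have "0 < nat r \<and> s4 (int (nat r) * p)" using r by simp
    then have "M \<le> nat r" unfolding M_def by (rule Least_le)
    then show False using r by linarith
  qed
  then show ?thesis using M by simp
qed

lemma s4_all: "n \<ge> 0 \<Longrightarrow> s4 (n::int)"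
proof (induction "nat n" arbitrary: n rule: less_induct)
  case less
  show ?case
  proof (cases "n \<le> 1")
    case True
    then have "n = 0 \<or> n = 1" using less.prems by linarith
    moreover have "s4 0" "s4 1" unfolding s4_def
      by (rule exI[of _ 0], rule exI[of _ 0], rule exI[of _ 0], rule exI[of _ 0], simp,
          rule exI[of _ 1], rule exI[of _ 0], rule exI[of _ 0], rule exI[of _ 0], simp)
    ultimately show ?thesis by auto
  next
    case False
    have "\<not> is_unit n" using False by (simp add: zdvd1_eq)
    then obtain q where q: "prime q" "q dvd n" using prime_divisor_exists[of n] False by auto
    then obtain c where c: "n = q*c" by (elim dvdE)
    have q2: "q \<ge> 2" using q prime_ge_2_int by blast
    have "0 < q*c" using c False by simp
    then have c0: "c > 0" using q2 by (simp add: zero_less_mult_iff)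
    have "2*c \<le> q*c" using q2 c0 by (simp add: mult_right_mono)
    then have "c < n" using c c0 by linarith
    then have "s4 c" using less c0 by simp
    then show ?thesis using c s4_mult prime_s4[OF q(1)] by simp
  qed
qed



lemma map_poly_of_int_mult:
  "map_poly (of_int :: int \<Rightarrow> 'a :: comm_ring_1) (p * q) = map_poly of_int p * map_poly of_int q"
  by (intro poly_eqI) (simp add: coeff_map_poly coeff_mult)

lemma map_poly_of_rat_mult:
  "map_poly (of_rat :: rat \<Rightarrow> 'a :: field_char_0) (p * q) = map_poly of_rat p * map_poly of_rat q"
  by (intro poly_eqI) (simp add: coeff_map_poly coeff_mult of_rat_sum of_rat_mult)

lemma map_poly_of_rat_add:
  "map_poly (of_rat :: rat \<Rightarrow> 'a :: field_char_0) (p + q) = map_poly of_rat p + map_poly of_rat q"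
  by (intro poly_eqI) (simp add: coeff_map_poly of_rat_add)

lemma map_poly_of_int_inj:
  "map_poly (of_int :: int \<Rightarrow> 'a :: ring_char_0) p = map_poly of_int q \<Longrightarrow> p = q"
  by (intro poly_eqI) (metis coeff_map_poly of_int_0 of_int_eq_iff)

lemma common_den:
  fixes f :: "rat poly"
  shows "\<exists>a::nat. a > 0 \<and> (\<forall>i. of_nat a * coeff f i \<in> \<int>)"
proof -
  define e where "e = (\<lambda>i. snd (quotient_of (coeff f i)))"
  define a where "a = (\<Prod>i\<le>degree f. e i)"
  have epos: "e i > 0" for i unfolding e_def by (rule quotient_of_denom_pos')
  have apos: "a > 0" unfolding a_def using epos by (simp add: prod_pos)
  have "of_int a * coeff f i \<in> \<int>" for i
  proof (cases "i \<le> degree f")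
    case True
    then have "e i dvd a" unfolding a_def by (intro dvd_prodI) auto
    then obtain k where k: "a = e i * k" by (elim dvdE)
    obtain n where qn: "quotient_of (coeff f i) = (n, e i)" unfolding e_def by (metis prod.collapse)
    then have "coeff f i = of_int n / of_int (e i)" by (rule quotient_of_div)
    then have "of_int a * coeff f i = of_int (k * n)" using epos[of i] unfolding k by (simp add: field_simps)
    then show ?thesis by simp
  next
    case False
    then show ?thesis by (simp add: coeff_eq_0)
  qed
  then show ?thesis using apos by (intro exI[of _ "nat a"]) simp
qed

lemma int_poly_of:
  fixes f :: "rat poly"
  assumes "\<forall>i. coeff f i \<in> \<int>"
  shows "map_poly of_int (map_poly floor f) = f"
proof (intro poly_eqI)
  fix n
  have "coeff f n \<in> \<int>" using assms by blast
  then show "coeff (map_poly of_int (map_poly floor f)) n = coeff f n"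
    by (simp add: coeff_map_poly)
qed

lemma gauss_prim:
  fixes f :: "rat poly"
  assumes lc: "lead_coeff f = 1"
  obtains a :: nat and F :: "int poly" where "a > 0" "map_poly of_int F = smult (of_nat a) f" "content F = 1"
proof -
  define P where "P = (\<lambda>a::nat. 0 < a \<and> (\<forall>i. of_nat a * coeff f i \<in> \<int>))"
  define a where "a = (LEAST a. P a)"
  have Pa: "P a" unfolding a_def using common_den[of f] LeastI_ex[of P] unfolding P_def by blast
  have amin: "a \<le> b" if "P b" for b unfolding a_def by (rule Least_le) (rule that)
  define F where "F = map_poly floor (smult (of_nat a) f)"
  have F: "map_poly of_int F = smult (of_nat a) f" unfolding F_def
    by (rule int_poly_of) (use Pa in \<open>simp add: P_def\<close>)
  have coeffF: "of_int (coeff F i) = of_nat a * coeff f i" for i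
    using arg_cong[OF F, of "\<lambda>p. coeff p i"] by (simp add: coeff_map_poly)
  have a0: "a > 0" using Pa P_def by blast
  have "content F = 1"
  proof (rule ccontr)
    assume c1: "content F \<noteq> 1"
    have "f \<noteq> 0" using lc by auto
    then have "F \<noteq> 0" using F a0 by auto
    then have "content F \<noteq> 0" by simp
    moreover have "content F \<ge> 0" by (metis normalize_content abs_ge_zero normalize_int_def)
    ultimately have "\<not> is_unit (content F)" using c1 by (simp add: zdvd1_eq)
    then obtain l where l: "prime l" "l dvd content F" using prime_divisor_exists[of "content F"] \<open>content F \<noteq> 0\<close> by auto
    have ldvd: "l dvd coeff F i" for i using l(2) content_dvd_coeff dvd_trans by blast
    have l2: "l \<ge> 2" using l(1) prime_ge_2_int by blast
    have "of_int (coeff F (degree f)) = (of_nat a :: rat)" using coeffF[of "degree f"] lc by simp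
    then have "coeff F (degree f) = int a" by (metis of_int_eq_iff of_int_of_nat_eq)
    then have "l dvd int a" using ldvd by metis
    then obtain a' where a': "int a = l * a'" by (elim dvdE)
    have a'0: "a' > 0" using a' a0 l2 by (smt (verit) mult_le_0_iff of_nat_0_less_iff)
    have "a' < int a" using a' a'0 l2 by (smt (verit) mult_less_cancel_right1 mult.commute)
    have "P (nat a')"
    proof -
      have "of_nat (nat a') * coeff f i \<in> \<int>" for i
      proof -
        obtain t where t: "coeff F i = l * t" using ldvd[of i] by (elim dvdE)
        have "of_int l * (of_int a' * coeff f i) = (of_int l * of_int t :: rat)"
          using coeffF[of i] t a' by (metis mult.assoc of_int_mult of_int_of_nat_eq)
        then have "of_int a' * coeff f i = (of_int t :: rat)" using l2 by simp
        then show ?thesis using a'0 by simp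
      qed
      then show ?thesis using a'0 unfolding P_def by simp
    qed
    then have "a \<le> nat a'" by (rule amin)
    moreover have "int (nat a') = a'" using a'0 by simp
    ultimately show False using \<open>a' < int a\<close> by linarith
  qed
  then show ?thesis using that a0 F by blast
qed

lemma gauss_monic:
  fixes f g :: "rat poly" and q :: "int poly"
  assumes "lead_coeff f = 1" "lead_coeff g = 1" "f * g = map_poly of_int q"
  shows "\<forall>i. coeff f i \<in> \<int>"
proof -
  obtain a F where aF: "a > 0" "map_poly of_int F = smult (of_nat a) f" "content F = 1"
    using gauss_prim[OF assms(1)] by blast
  obtain b G where bG: "b > 0" "map_poly of_int G = smult (of_nat b) g" "content G = 1"
    using gauss_prim[OF assms(2)] by blast
  have "map_poly of_int (F * G) = smult (of_nat (a*b)) (f * g)"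
    by (simp add: map_poly_of_int_mult aF(2) bG(2) mult_smult_left mult_smult_right ac_simps)
  also have "\<dots> = (map_poly of_int (smult (int (a*b)) q) :: rat poly)"
    by (simp add: assms(3) map_poly_smult)
  finally have "F * G = smult (int (a*b)) q" by (rule map_poly_of_int_inj)
  then have "content (F * G) = content (smult (int (a*b)) q)" by simp
  then have "1 = int (a*b) * content q" by (simp add: content_mult aF(3) bG(3))
  then have "int (a*b) dvd 1" by (metis dvdI)
  then have "int (a * b) = 1" by simp
  then have "a * b = 1" by linarith
  then have "a = 1" by simp
  then have "map_poly of_int F = f" using aF(2) by simp
  then show ?thesis by (metis Ints_of_int coeff_map_poly of_int_0)
qed



lemma div_lemma:
  fixes z :: complex and m :: "rat poly" and q :: "int poly"
  assumes lm: "lead_coeff m = 1" and mz: "poly (map_poly of_rat m) z = 0"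
    and small: "\<And>r. degree r < degree m \<Longrightarrow> poly (map_poly of_rat r) z = 0 \<Longrightarrow> r = 0"
    and lq: "lead_coeff q = 1" and qz: "poly (map_poly of_int q) z = 0"
  shows "\<forall>i. coeff m i \<in> \<int>"
proof -
  define Q where "Q = (map_poly of_int q :: rat poly)"
  define g where "g = Q div m"
  define r where "r = Q mod m"
  have Qe: "Q = g * m + r" unfolding g_def r_def by simp
  have m0: "m \<noteq> 0" using lm by auto
  have "map_poly (of_rat :: rat \<Rightarrow> complex) Q = map_poly of_int q"
    unfolding Q_def by (simp add: map_poly_map_poly o_def)
  then have "poly (map_poly of_rat (g * m + r)) z = 0" using qz Qe by simp
  then have rz: "poly (map_poly of_rat r) z = 0"
    using mz by (simp add: map_poly_of_rat_add map_poly_of_rat_mult)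
  have r0: "r = 0"
  proof (rule ccontr)
    assume "r \<noteq> 0"
    then have "degree r < degree m" unfolding r_def using m0 by (intro degree_mod_less') auto
    then show False using small rz \<open>r \<noteq> 0\<close> by blast
  qed
  have lQ: "lead_coeff Q = 1" unfolding Q_def using lq
    by (subst lead_coeff_map_poly_nz) auto
  have mg: "m * g = Q" using Qe r0 by (simp add: mult.commute)
  then have "lead_coeff g = 1" using lQ lm by (metis lead_coeff_mult mult_1)
  then show ?thesis using gauss_monic[OF lm _ mg[unfolded Q_def]] by blast
qed

definition qf :: "nat \<Rightarrow> rat \<Rightarrow> rat \<Rightarrow> complex" where
  "qf d a b = of_real (real_of_rat a) + of_real (real_of_rat b) * \<i> * of_real (sqrt (real d))"

lemma quad_field_iff: "z \<in> quad_field d \<longleftrightarrow> (\<exists>a b. z = qf d a b)"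
  by (auto simp: quad_field_def qf_def)

lemma qf_Re [simp]: "Re (qf d a b) = of_rat a" by (simp add: qf_def)
lemma qf_Im [simp]: "Im (qf d a b) = of_rat b * sqrt (real d)" by (simp add: qf_def)

lemma qf_inj:
  assumes "d > 0" "qf d a b = qf d a' b'"
  shows "a = a' \<and> b = b'"
proof -
  have "Re (qf d a b) = Re (qf d a' b')" "Im (qf d a b) = Im (qf d a' b')" using assms by simp_all
  then show ?thesis using assms(1) by simp
qed

lemma qf_add: "qf d a b + qf d a' b' = qf d (a + a') (b + b')"
  by (simp add: complex_eq_iff of_rat_add algebra_simps)

lemma qf_mult: "qf d a b * qf d a' b' = qf d (a*a' - of_nat d * b*b') (a*b' + a'*b)"
proof -
  have s: "sqrt (real d) * sqrt (real d) = real d" by simp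
  show ?thesis by (simp add: complex_eq_iff of_rat_add of_rat_mult of_rat_diff algebra_simps)
qed

lemma qf_cnj: "cnj (qf d a b) = qf d a (-b)"
  by (simp add: complex_eq_iff of_rat_minus)

lemma qf_of_int: "(of_int k :: complex) = qf d (of_int k) 0"
  by (simp add: complex_eq_iff)

lemma qf_zero_b: "qf d a 0 = of_real (of_rat a)"
  by (simp add: complex_eq_iff)

lemma alg_int_suff:
  assumes "2*a \<in> \<int>" "a^2 + of_nat d * b^2 \<in> \<int>"
  shows "alg_int (qf d a b)"
proof -
  obtain s where s: "2*a = of_int s" using assms(1) by (elim Ints_cases)
  obtain n where n: "a^2 + of_nat d * b^2 = of_int n" using assms(2) by (elim Ints_cases)
  have rs: "real_of_int s = 2 * real_of_rat a"
    using arg_cong[OF s, of real_of_rat] by (simp add: of_rat_mult)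
  have rn: "real_of_int n = (real_of_rat a)^2 + real d * (real_of_rat b)^2"
    using arg_cong[OF n, of real_of_rat] by (simp add: of_rat_mult of_rat_add of_rat_power)
  define q where "q = [:n, -s, 1:]"
  have "lead_coeff q = 1" by (simp add: q_def)
  moreover have "poly (map_poly of_int q) (qf d a b) = 0"
  proof -
    have sq: "sqrt (real d) * sqrt (real d) = real d" by simp
    have "poly (map_poly of_int q) (qf d a b) = of_int n + qf d a b * (- of_int s + qf d a b)"
      by (simp add: q_def map_poly_pCons)
    also have "\<dots> = 0"
      by (simp add: complex_eq_iff rs rn algebra_simps power2_eq_square sq)
    finally show ?thesis .
  qed
  ultimately show ?thesis unfolding alg_int_def by blast
qed


lemma of_real_of_rat_c: "(of_real (of_rat r) :: complex) = of_rat r"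
proof -
  obtain n e where "quotient_of r = (n, e)" by (metis prod.collapse)
  then have r: "r = of_int n / of_int e" by (rule quotient_of_div)
  show ?thesis unfolding r by (simp add: of_rat_divide)
qed

lemma deg1_poly: "degree (r :: 'a::zero poly) \<le> 1 \<Longrightarrow> r = [:coeff r 0, coeff r 1:]"
  by (intro poly_eqI) (auto simp: coeff_pCons coeff_eq_0 split: nat.split)

lemma deg0_poly: "degree (r :: 'a::zero poly) = 0 \<Longrightarrow> r = [:coeff r 0:]"
  by (intro poly_eqI) (auto simp: coeff_pCons coeff_eq_0 split: nat.split)

lemma alg_int_nec:
  assumes d0: "d > 0" and ai: "alg_int (qf d a b)"
  shows "2*a \<in> \<int> \<and> a^2 + of_nat d * b^2 \<in> \<int>"
proof -
  define z where "z = qf d a b"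
  obtain q :: "int poly" where q: "lead_coeff q = 1" "poly (map_poly of_int q) z = 0"
    using ai unfolding alg_int_def z_def by blast
  have sq: "sqrt (real d) * sqrt (real d) = real d" by simp
  have sdp: "sqrt (real d) \<noteq> 0" using d0 by simp
  show ?thesis
  proof (cases "b = 0")
    case True
    define m where "m = [:-a, 1:]"
    have "\<forall>i. coeff m i \<in> \<int>"
    proof (rule div_lemma[OF _ _ _ q])
      show "lead_coeff m = 1" by (simp add: m_def)
      show "poly (map_poly of_rat m) z = 0"
        by (simp add: m_def map_poly_pCons z_def True qf_zero_b of_real_of_rat_c of_rat_minus)
      fix r :: "rat poly" assume "degree r < degree m" "poly (map_poly of_rat r) z = 0"
      then have "degree r = 0" by (simp add: m_def)
      then have r: "r = [:coeff r 0:]" by (rule deg0_poly)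
      have "poly (map_poly of_rat [:coeff r 0:]) z = 0" using r \<open>poly (map_poly of_rat r) z = 0\<close> by metis
      then have "coeff r 0 = 0" by (simp add: map_poly_pCons)
      then show "r = 0" using r by simp
    qed
    then have "coeff m 0 \<in> \<int>" by blast
    then have "a \<in> \<int>" by (simp add: m_def)
    then show ?thesis using True by simp
  next
    case False
    define m where "m = [:a^2 + of_nat d * b^2, -2*a, 1:]"
    have "\<forall>i. coeff m i \<in> \<int>"
    proof (rule div_lemma[OF _ _ _ q])
      show "lead_coeff m = 1" by (simp add: m_def)
      show "poly (map_poly of_rat m) z = 0"
        by (simp add: m_def map_poly_pCons z_def of_real_of_rat_c[symmetric] of_rat_minus of_rat_add
            of_rat_mult of_rat_power complex_eq_iff algebra_simps power2_eq_square sq)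
      fix r :: "rat poly" assume "degree r < degree m" "poly (map_poly of_rat r) z = 0"
      then have "degree r \<le> 1" by (simp add: m_def)
      then have r: "r = [:coeff r 0, coeff r 1:]" by (rule deg1_poly)
      have "poly (map_poly of_rat [:coeff r 0, coeff r 1:]) z = 0" using r \<open>poly (map_poly of_rat r) z = 0\<close> by metis
      then have e: "of_real (of_rat (coeff r 0)) + z * of_real (of_rat (coeff r 1)) = 0"
        by (simp add: map_poly_pCons of_real_of_rat_c)
      have "Im (of_real (of_rat (coeff r 0)) + z * of_real (of_rat (coeff r 1))) = 0" using e by simp
      then have "of_rat (coeff r 1) * (of_rat b * sqrt (real d)) = (0::real)" using e by (auto simp: z_def)
      then have c1: "coeff r 1 = 0" using False sdp by simp
      have "Re (of_real (of_rat (coeff r 0)) + z * of_real (of_rat (coeff r 1))) = 0" using e by simp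
      then have "coeff r 0 = 0" using c1 by (simp add: z_def)
      then show "r = 0" using r c1 by simp
    qed
    then have "coeff m 0 \<in> \<int>" "coeff m 1 \<in> \<int>" by blast+
    then have "a^2 + of_nat d * b^2 \<in> \<int>" "-2*a \<in> \<int>" by (simp_all add: m_def)
    then show ?thesis by (metis Ints_minus minus_minus mult_minus_left)
  qed
qed



lemma frob:
  fixes p m r :: int
  assumes p0: "p > 0" and "m > 0" and cop: "coprime p m" and rb: "r \<ge> (p-1)*m"
  shows "\<exists>A B. A \<ge> 0 \<and> B \<ge> 0 \<and> p*A + m*B = r"
proof -
  have "gcd m p = 1" using cop by (simp add: coprime_iff_gcd_eq_1 gcd.commute)
  then obtain u v where uv: "u * m + v * p = 1" using bezout_int[of m p] by auto
  define B where "B = (r*u) mod p"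
  have B0: "0 \<le> B" "B \<le> p - 1" using p0 by (auto simp: B_def)
  have Be: "B = r*u - (r*u) div p * p" unfolding B_def by (rule minus_div_mult_eq_mod[symmetric])
  define A where "A = r * v + m*((r*u) div p)"
  have rr: "r = r*(u * m + v * p)" using uv by simp
  have "p*A + m*B = r*(u * m + v * p)" unfolding A_def Be by (simp add: algebra_simps)
  then have eq: "p*A + m*B = r" using rr by simp
  have "m*B \<le> m*(p-1)" using B0 assms(2) by (simp add: mult_left_mono)
  then have "p*A \<ge> 0" using eq rb by (simp add: algebra_simps)
  then have "A \<ge> 0" using p0 by (simp add: zero_le_mult_iff)
  then show ?thesis using eq B0 by blast
qed

lemma sqfree_rat:
  fixes w :: rat
  assumes sf: "squarefree d" and "d > 0" and di: "of_nat d * w^2 \<in> \<int>"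
  shows "w \<in> \<int>"
proof -
  obtain n e where qe: "quotient_of w = (n, e)" by (metis prod.collapse)
  have e0: "e > 0" using qe quotient_of_denom_pos by blast
  have cop: "coprime n e" using qe quotient_of_coprime by blast
  have w: "w = of_int n / of_int e" using qe quotient_of_div by blast
  obtain k where k: "of_nat d * w^2 = of_int k" using di by (elim Ints_cases)
  have "of_int (int d * n^2) = (of_int (k * e^2) :: rat)" using k e0 unfolding w
    by (simp add: field_simps power2_eq_square)
  then have eq: "int d * n^2 = k * e^2" by (simp only: of_int_eq_iff)
  then have "e^2 dvd int d * n^2" by (metis dvd_triv_right)
  moreover have "coprime (e^2) (n^2)" using cop by (simp add: coprime_commute)
  ultimately have "e^2 dvd int d" using coprime_dvd_mult_left_iff by blast
  moreover have "e^2 = int ((nat e)^2)" using e0 by simp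
  ultimately have "(nat e)^2 dvd d" by (metis int_dvd_int_iff)
  then have "nat e dvd 1" using squarefreeD sf by blast
  then have "e = 1" using e0 by simp
  then show ?thesis using w by simp
qed

lemma O_int: "(of_int k :: complex) \<in> ring_of_ints d"
proof -
  have "alg_int (qf d (of_int k) 0)" by (rule alg_int_suff) auto
  then show ?thesis unfolding ring_of_ints_def quad_field_iff using qf_of_int[of k d] by auto
qed

lemma PZ:
  assumes pi: "prime_ideal d P" and pp: "prime p" and pP: "(of_nat p :: complex) \<in> P"
    and kP: "(of_int k :: complex) \<in> P"
  shows "int p dvd k"
proof (rule ccontr)
  assume nd: "\<not> int p dvd k"
  have "coprime (int p) k" using nd pp by (intro prime_imp_coprime) auto
  then have "gcd (int p) k = 1" by (simp add: coprime_iff_gcd_eq_1)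
  then obtain u v where uv: "u * int p + v * k = 1" using bezout_int[of "int p" k] by auto
  have idl: "is_ideal d P" using pi unfolding prime_ideal_def by blast
  have "(of_int u :: complex) * of_nat p \<in> P" using idl pP O_int unfolding is_ideal_def by blast
  moreover have "(of_int v :: complex) * of_int k \<in> P" using idl kP O_int unfolding is_ideal_def by blast
  ultimately have "(of_int u :: complex) * of_nat p + of_int v * of_int k \<in> P" using idl unfolding is_ideal_def by blast
  moreover have "(of_int u :: complex) * of_nat p + of_int v * of_int k = of_int (u * int p + v * k)" by simp
  ultimately have one: "(1::complex) \<in> P" using uv by simp
  have "ring_of_ints d \<subseteq> P"
  proof
    fix a assume "a \<in> ring_of_ints d"
    then have "a * 1 \<in> P" using idl one unfolding is_ideal_def by blast
    then show "a \<in> P" by simp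
  qed
  then have "P = ring_of_ints d" using idl unfolding is_ideal_def by blast
  then show False using pi unfolding prime_ideal_def by blast
qed



theorem theorem1:
  fixes d p r :: nat and P :: "complex set"
  assumes "squarefree d" and "d > 0"
    and "class_number d \<ge> 4"
    and "prime_ideal d P" and "\<not> principal_ideal d P"
    and "prime p" and "of_nat p \<in> P"
    and "p dvd d"
    and "r > 0" and "real r \<ge> (real p - 1) * real d / real p"
  shows "represented_by_I4 d P (\<lambda>x y. x * cnj y * of_real (real r / real p))"
proof -
  note sf = assms(1) and d0 = assms(2) and pi = assms(4) and pp = assms(6) and pP = assms(7)
  have idl: "is_ideal d P" using pi unfolding prime_ideal_def by blast
  have PO: "P \<subseteq> ring_of_ints d" using idl unfolding is_ideal_def by blast
  obtain m where dm: "d = p * m" using assms(8) by (elim dvdE)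
  have p2: "p \<ge> 2" using pp prime_ge_2_nat by blast
  have m0: "m > 0" using d0 dm by (cases m) auto
  have copm: "coprime p m"
  proof (rule ccontr)
    assume "\<not> coprime p m"
    then have "p dvd m" using pp prime_imp_coprime by blast
    then have "p^2 dvd d" unfolding dm by (simp add: power2_eq_square mult_dvd_mono)
    then have "p dvd 1" using sf squarefreeD by blast
    then show False using p2 by simp
  qed
  have "(real p - 1) * real d / real p = (real p - 1) * real m" unfolding dm using p2 by simp
  then have "real r \<ge> (real p - 1) * real m" using assms(10) by simp
  moreover have "real_of_int ((int p - 1) * int m) = (real p - 1) * real m" by simp
  ultimately have "real_of_int ((int p - 1) * int m) \<le> real_of_int (int r)" by simp
  then have "int r \<ge> (int p - 1) * int m" by (simp only: of_int_le_iff)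
  moreover have "coprime (int p) (int m)" using copm by simp
  ultimately obtain A B where AB: "A \<ge> 0" "B \<ge> 0" "int p * A + int m * B = int r"
    using frob[of "int p" "int m" "int r"] p2 m0 by auto
  obtain a1 a2 a3 a4 where sa: "A = a1^2 + a2^2 + a3^2 + a4^2" using s4_all[OF AB(1)] unfolding s4_def by blast
  obtain b1 b2 b3 b4 where sb: "B = b1^2 + b2^2 + b3^2 + b4^2" using s4_all[OF AB(2)] unfolding s4_def by blast
  define av :: "4 \<Rightarrow> int" where "av = (\<lambda>i. if i = 1 then a1 else if i = 2 then a2 else if i = 3 then a3 else a4)"
  define bv :: "4 \<Rightarrow> int" where "bv = (\<lambda>i. if i = 1 then b1 else if i = 2 then b2 else if i = 3 then b3 else b4)"
  define wr :: "4 \<Rightarrow> rat" where "wr = (\<lambda>i. of_int (bv i) / of_nat p)"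
  define wv :: "4 \<Rightarrow> complex" where "wv = (\<lambda>i. qf d (of_int (av i)) (wr i))"
  have pr0: "(of_nat p :: rat) \<noteq> 0" using p2 by simp
  have drat: "(of_nat d :: rat) = of_nat p * of_nat m" unfolding dm by simp

  have wn: "wv i * cnj (wv i) = of_real (of_rat (of_int (av i)^2 + of_nat d * (wr i)^2))" for i
    unfolding wv_def qf_cnj qf_mult by (simp add: qf_zero_b power2_eq_square)
  have sumw: "(\<Sum>i\<in>UNIV. wv i * cnj (wv i)) = of_real (real r / real p)"
  proof -
    have "(\<Sum>i\<in>UNIV. of_int (av i)^2 + of_nat d * (wr i)^2) = (of_int A + of_nat d * of_int B / (of_nat p)^2 :: rat)"
      unfolding sum_4 sa sb av_def wr_def bv_def by (simp add: power_divide add_divide_distrib algebra_simps)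
    also have "\<dots> = of_nat r / of_nat p"
    proof -
      have "of_int (int p * A + int m * B) = (of_nat r :: rat)" using AB(3) by simp
      then show ?thesis using pr0 unfolding drat by (simp add: field_simps power2_eq_square)
    qed
    finally have e: "(\<Sum>i\<in>UNIV. of_int (av i)^2 + of_nat d * (wr i)^2) = (of_nat r / of_nat p :: rat)" .
    have "(\<Sum>i\<in>UNIV. wv i * cnj (wv i)) = (\<Sum>i\<in>UNIV. of_real (of_rat (of_int (av i)^2 + of_nat d * (wr i)^2)))"
      using wn by simp
    also have "\<dots> = of_real (of_rat (\<Sum>i\<in>UNIV. of_int (av i)^2 + of_nat d * (wr i)^2))"
      by (simp add: of_rat_sum)
    also have "\<dots> = of_real (real r / real p)" unfolding e by (simp add: of_rat_divide)
    finally show ?thesis .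
  qed
  have wnz: "\<exists>i. wv i \<noteq> 0"
  proof (rule ccontr)
    assume "\<not> (\<exists>i. wv i \<noteq> 0)"
    then have "(\<Sum>i\<in>UNIV. wv i * cnj (wv i)) = 0" by simp
    then have "real r / real p = 0" using sumw by simp
    then show False using assms(9) p2 by simp
  qed

  have key1: "x * wv i \<in> ring_of_ints d" if xP: "x \<in> P" for x i
  proof -
    have xO: "x \<in> ring_of_ints d" using xP PO by blast
    then obtain \<alpha> \<beta> where x: "x = qf d \<alpha> \<beta>" unfolding ring_of_ints_def quad_field_iff by blast
    have ai: "alg_int (qf d \<alpha> \<beta>)" using xO x unfolding ring_of_ints_def by blast
    have nec: "2*\<alpha> \<in> \<int>" "\<alpha>^2 + of_nat d * \<beta>^2 \<in> \<int>" using alg_int_nec[OF d0 ai] by blast+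
    obtain t where t: "2*\<alpha> = of_int t" using nec(1) by (elim Ints_cases)
    obtain n where n: "\<alpha>^2 + of_nat d * \<beta>^2 = of_int n" using nec(2) by (elim Ints_cases)
    have "alg_int (qf d \<alpha> (-\<beta>))" by (rule alg_int_suff) (use nec in simp_all)
    then have cO: "cnj x \<in> ring_of_ints d" unfolding x qf_cnj ring_of_ints_def quad_field_iff by blast
    have "cnj x * x \<in> P" using idl cO xP unfolding is_ideal_def by blast
    moreover have "cnj x * x = of_int n"
    proof -
      have "cnj x * x = qf d (\<alpha>^2 + of_nat d * \<beta>^2) 0" unfolding x qf_cnj qf_mult
        by (simp add: power2_eq_square algebra_simps)
      also have "\<dots> = of_int n" unfolding n by (simp add: qf_zero_b)
      finally show ?thesis .
    qed
    ultimately have "int p dvd n" using PZ[OF pi pp pP] by simp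
    then obtain n' where n': "n = int p * n'" by (elim dvdE)
    have N: "\<alpha>^2 + of_nat d * \<beta>^2 = of_int n' * of_nat p" unfolding n n' by simp
    have "of_nat d * (2*\<beta>)^2 = 4 * (\<alpha>^2 + of_nat d * \<beta>^2) - (2*\<alpha>)^2" by (simp add: algebra_simps power2_eq_square)
    also have "\<dots> \<in> \<int>" unfolding n t by simp
    finally have "2*\<beta> \<in> \<int>" using sqfree_rat[OF sf d0] by blast
    then obtain w where w: "2*\<beta> = of_int w" by (elim Ints_cases)
    define a where "a = (of_int (av i) :: rat)"
    define b where "b = (of_int (bv i) :: rat)"
    have xw: "x * wv i = qf d (\<alpha> * a - of_nat d * \<beta> * (b / of_nat p)) (\<alpha> * (b / of_nat p) + a * \<beta>)"
      unfolding x wv_def qf_mult a_def b_def wr_def by simp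
    have ai2: "alg_int (qf d (\<alpha> * a - of_nat d * \<beta> * (b / of_nat p)) (\<alpha> * (b / of_nat p) + a * \<beta>))"
    proof (rule alg_int_suff)
      have "2 * (\<alpha> * a - of_nat d * \<beta> * (b / of_nat p)) = of_int t * a - of_nat m * of_int w * b"
        using pr0 unfolding drat t[symmetric] w[symmetric] by (simp add: field_simps)
      then show "2 * (\<alpha> * a - of_nat d * \<beta> * (b / of_nat p)) \<in> \<int>" by (simp add: a_def b_def)
      have "(\<alpha> * a - of_nat d * \<beta> * (b / of_nat p))^2 + of_nat d * (\<alpha> * (b / of_nat p) + a * \<beta>)^2
          = (\<alpha>^2 + of_nat d * \<beta>^2) * (a^2 + of_nat d * b^2 / (of_nat p)^2)"
        using pr0 by (simp add: field_simps power2_eq_square)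
      also have "\<dots> = of_int n' * of_nat p * a^2 + of_int n' * of_nat m * b^2"
        using pr0 unfolding N unfolding drat by (simp add: field_simps power2_eq_square)
      finally show "(\<alpha> * a - of_nat d * \<beta> * (b / of_nat p))^2 + of_nat d * (\<alpha> * (b / of_nat p) + a * \<beta>)^2 \<in> \<int>"
        by (simp add: a_def b_def)
    qed
    have "x * wv i \<in> quad_field d" unfolding quad_field_iff xw by blast
    then show ?thesis unfolding ring_of_ints_def using ai2 xw by simp
  qed

  define \<sigma> :: "complex \<Rightarrow> complex ^ 4" where "\<sigma> = (\<lambda>x. \<chi> i. x * wv i)"
  show ?thesis unfolding represented_by_I4_def
  proof (intro exI[of _ \<sigma>] conjI ballI allI)
    fix x i assume "x \<in> P"
    then show "\<sigma> x $ i \<in> ring_of_ints d" unfolding \<sigma>_def using key1 by simp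
  next
    fix x y assume "x \<in> P" "y \<in> P"
    show "\<sigma> (x + y) = \<sigma> x + \<sigma> y" unfolding \<sigma>_def by (simp add: vec_eq_iff distrib_right)
  next
    fix a x i assume "a \<in> ring_of_ints d" "x \<in> P"
    show "\<sigma> (a * x) $ i = a * (\<sigma> x $ i)" unfolding \<sigma>_def by simp
  next
    show "inj_on \<sigma> P"
    proof
      fix x y assume "x \<in> P" "y \<in> P" "\<sigma> x = \<sigma> y"
      obtain i where i: "wv i \<noteq> 0" using wnz by blast
      have "\<sigma> x $ i = \<sigma> y $ i" using \<open>\<sigma> x = \<sigma> y\<close> by simp
      then have "x * wv i = y * wv i" unfolding \<sigma>_def by simp
      then show "x = y" using i by simp
    qed
  next
    fix x y assume "x \<in> P" "y \<in> P"
    have "(\<Sum>i\<in>UNIV. \<sigma> x $ i * cnj (\<sigma> y $ i)) = (\<Sum>i\<in>UNIV. x * cnj y * (wv i * cnj (wv i)))"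
      unfolding \<sigma>_def by (simp add: algebra_simps)
    also have "\<dots> = x * cnj y * (\<Sum>i\<in>UNIV. wv i * cnj (wv i))" by (simp add: sum_distrib_left)
    also have "\<dots> = x * cnj y * of_real (real r / real p)" unfolding sumw ..
    finally show "(\<Sum>i\<in>UNIV. \<sigma> x $ i * cnj (\<sigma> y $ i)) = x * cnj y * of_real (real r / real p)" .
  qed
qed


end
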